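(* If there exist an orthogonal design of order $4m$ and type $(s_1,\ldots,s_u)$ and two Hadamard matrices of order $4n$ that are quasi-unbiased for parameters $(4n,4n,l,a)$, then there exist two orthogonal designs of order $8mn$ and type $(2ns_1,\ldots,2ns_u)$ that are unbiased with parameter $\alpha=16n^2/a$.
   Context: A Hadamard matrix of order $n$ is an $n\times n$ $(1,-1)$-matrix $H$ with $HH^\top=nI_n$; a weighing matrix of order $n$ and weight $k$ is an $n\times n$ $(0,1,-1)$-matrix $W$ with $WW^\top=kI_n$. Two weighing matrices (in particular Hadamard matrices) $W_1,W_2$ of order $n$ and weight $k$ are quasi-unbiased for parameters $(n,k,l,a)$ if $\frac1{\sqrt a}W_1W_2^\top$ is a weighing matrix of order $n$ and weight $l$. An orthogonal design of order $n$ and type $(s_1,\ldots,s_u)$ in distinct commuting real indeterminates $x_1,\ldots,x_u$ is an $n\times n$ matrix $D$ with entries in $\{0,\pm x_1,\ldots,\pm x_u\}$ with $DD^\top=(s_1x_1^2+\cdots+s_ux_u^2)I_n$. Two orthogonal designs $D_1,D_2$ of the same order and type $(t_1,\ldots,t_u)$ in the same variables are unbiased with parameter $\alpha$ if $\alpha>0$ and there is a $(0,1,-1)$-matrix $V$ with $D_1D_2^\top=\frac{t_1x_1^2+\cdots+t_ux_u^2}{\sqrt\alpha}V$. *)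

theory Defs
  imports "Jordan_Normal_Form.Matrix"
begin

definition weighing_matrix :: "nat \<Rightarrow> nat \<Rightarrow> real mat \<Rightarrow> bool" where
  "weighing_matrix n k W \<longleftrightarrow> W \<in> carrier_mat n n \<and>
     (\<forall>i<n. \<forall>j<n. W $$ (i,j) \<in> {0, 1, -1}) \<and>
     W * W\<^sup>T = real k \<cdot>\<^sub>m 1\<^sub>m n"

definition hadamard_matrix :: "nat \<Rightarrow> real mat \<Rightarrow> bool" where
  "hadamard_matrix n H \<longleftrightarrow> H \<in> carrier_mat n n \<and>
     (\<forall>i<n. \<forall>j<n. H $$ (i,j) \<in> {1, -1}) \<and>
     H * H\<^sup>T = real n \<cdot>\<^sub>m 1\<^sub>m n"

text \<open>Quasi-unbiased weighing matrices for parameters (n,k,l,a); a > 0 so that 1/sqrt a makes sense.\<close>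
definition quasi_unbiased :: "nat \<Rightarrow> nat \<Rightarrow> nat \<Rightarrow> real \<Rightarrow> real mat \<Rightarrow> real mat \<Rightarrow> bool" where
  "quasi_unbiased n k l a W1 W2 \<longleftrightarrow> weighing_matrix n k W1 \<and> weighing_matrix n k W2 \<and>
     a > 0 \<and> weighing_matrix n l ((1 / sqrt a) \<cdot>\<^sub>m (W1 * W2\<^sup>T))"

text \<open>Orthogonal designs in indeterminates x_1..x_u are encoded as integer matrices:
  entry 0 stands for 0, entry k (1 \<le> k \<le> u) for x_k and entry -k for -x_k.  A polynomial identity over the
  reals holds iff it holds for all real assignments.\<close>
definition od_eval :: "int mat \<Rightarrow> (nat \<Rightarrow> real) \<Rightarrow> real mat" where
  "od_eval D x = mat (dim_row D) (dim_col D)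
     (\<lambda>(i,j). real_of_int (sgn (D $$ (i,j))) * x (nat \<bar>D $$ (i,j)\<bar>))"

definition od_form :: "nat \<Rightarrow> (nat \<Rightarrow> nat) \<Rightarrow> (nat \<Rightarrow> real) \<Rightarrow> real" where
  "od_form u s x = (\<Sum>k=1..u. real (s k) * (x k)\<^sup>2)"

definition orthogonal_design :: "nat \<Rightarrow> nat \<Rightarrow> (nat \<Rightarrow> nat) \<Rightarrow> int mat \<Rightarrow> bool" where
  "orthogonal_design n u s D \<longleftrightarrow> D \<in> carrier_mat n n \<and>
     (\<forall>i<n. \<forall>j<n. \<bar>D $$ (i,j)\<bar> \<le> int u) \<and>
     (\<forall>x. od_eval D x * (od_eval D x)\<^sup>T = od_form u s x \<cdot>\<^sub>m 1\<^sub>m n)"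

definition unbiased_ods :: "nat \<Rightarrow> nat \<Rightarrow> (nat \<Rightarrow> nat) \<Rightarrow> real \<Rightarrow> int mat \<Rightarrow> int mat \<Rightarrow> bool" where
  "unbiased_ods n u t \<alpha> D1 D2 \<longleftrightarrow>
     orthogonal_design n u t D1 \<and> orthogonal_design n u t D2 \<and> \<alpha> > 0 \<and>
     (\<exists>V \<in> carrier_mat n n. (\<forall>i<n. \<forall>j<n. V $$ (i,j) \<in> {0, 1, -1}) \<and>
        (\<forall>x. od_eval D1 x * (od_eval D2 x)\<^sup>T = (od_form u t x / sqrt \<alpha>) \<cdot>\<^sub>m V))"

end

theory Submission
  imports Defs
begin

lemma sum_add_split: "(\<Sum>c<a+b. g c) = (\<Sum>c<a. g c) + (\<Sum>q<b. g (a+q))"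
  for g :: "nat \<Rightarrow> 'a::comm_monoid_add"
  by (induction b) (simp_all add: add.assoc)

lemma sum_mult_split: "(\<Sum>c<A*B. g c) = (\<Sum>j<A. \<Sum>q<B. g (j*B+q))"
  for g :: "nat \<Rightarrow> 'a::comm_monoid_add"
proof (induction A)
  case 0 then show ?case by simp
next
  case (Suc A)
  have "Suc A * B = A*B + B" by simp
  then show ?case using Suc by (simp only: sum_add_split sum.lessThan_Suc)
qed

definition constr :: "nat \<Rightarrow> nat \<Rightarrow> int mat \<Rightarrow> real mat \<Rightarrow> int mat" where
  "constr m n D H = mat (8*m*n) (8*m*n) (\<lambda>(r,c).
     (if H $$ (r mod (4*n), c mod (2*n)) > 0 then 1 else -1) *
     (if H $$ (r mod (4*n), c mod (2*n)) = H $$ (r mod (4*n), c mod (2*n) + 2*n)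
      then D $$ (r div (4*n), c div (2*n)) else D $$ (r div (4*n) + 2*m, c div (2*n))))"

lemma decode:
  fixes n m r :: nat
  assumes "n > 0" "r < 8*m*n"
  shows "r div (4*n) < 2*m" "r mod (4*n) < 4*n" "r div (2*n) < 4*m" "r mod (2*n) < 2*n"
    "r mod (2*n) + 2*n < 4*n"
proof -
  have a: "r < (2*m)*(4*n)" "r < (4*m)*(2*n)" using assms by (auto simp: algebra_simps)
  show "r div (4*n) < 2*m" using a(1) by (simp add: less_mult_imp_div_less)
  show "r div (2*n) < 4*m" using a(2) by (simp add: less_mult_imp_div_less)
  show "r mod (4*n) < 4*n" "r mod (2*n) < 2*n" "r mod (2*n) + 2*n < 4*n" using assms by auto
qed

lemma constr_eval:
  assumes D: "D \<in> carrier_mat (4*m) (4*m)"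
    and H: "\<forall>i<4*n. \<forall>j<4*n. H $$ (i,j) \<in> {1,-1}"
    and n: "n > 0" and r: "r < 8*m*n" and c: "c < 8*m*n"
  shows "od_eval (constr m n D H) x $$ (r,c) =
    od_eval D x $$ (r div (4*n), c div (2*n)) *
      ((H $$ (r mod (4*n), c mod (2*n)) + H $$ (r mod (4*n), c mod (2*n) + 2*n)) / 2) +
    od_eval D x $$ (r div (4*n) + 2*m, c div (2*n)) *
      ((H $$ (r mod (4*n), c mod (2*n)) - H $$ (r mod (4*n), c mod (2*n) + 2*n)) / 2)"
proof -
  note dc = decode[OF n r] decode[OF n c]
  have h1: "H $$ (r mod (4*n), c mod (2*n)) \<in> {1,-1}" using H dc by auto
  have h2: "H $$ (r mod (4*n), c mod (2*n)+2*n) \<in> {1,-1}" using H dc by auto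
  have dims: "dim_row D = 4*m" "dim_col D = 4*m" using D by auto
  have i1: "r div (4*n) < 4*m" "r div (4*n) + 2*m < 4*m" using dc by auto
  have e: "\<And>i j. i < 4*m \<Longrightarrow> j < 4*m \<Longrightarrow> od_eval D x $$ (i,j) = real_of_int (sgn (D$$(i,j))) * x (nat \<bar>D$$(i,j)\<bar>)"
    unfolding od_eval_def using dims by simp
  have ce: "constr m n D H $$ (r,c) = (if H $$ (r mod (4*n), c mod (2*n)) > 0 then 1 else -1) *
     (if H $$ (r mod (4*n), c mod (2*n)) = H $$ (r mod (4*n), c mod (2*n) + 2*n)
      then D $$ (r div (4*n), c div (2*n)) else D $$ (r div (4*n) + 2*m, c div (2*n)))"
    unfolding constr_def using r c by simp
  have "od_eval (constr m n D H) x $$ (r,c) = real_of_int (sgn (constr m n D H $$ (r,c))) * x (nat \<bar>constr m n D H $$ (r,c)\<bar>)"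
    unfolding od_eval_def using r c by (simp add: constr_def)
  then show ?thesis
    unfolding ce
    using h1 h2 by (auto simp: sgn_mult abs_mult e[OF i1(1) dc(8)] e[OF i1(2) dc(8)])
qed


lemma od_orth:
  assumes OD: "orthogonal_design (4*m) u s D" and i: "i < 4*m" and k: "k < 4*m"
  shows "(\<Sum>j<4*m. od_eval D x $$ (i,j) * od_eval D x $$ (k,j)) = (if i = k then od_form u s x else 0)"
proof -
  have D: "D \<in> carrier_mat (4*m) (4*m)" using OD unfolding orthogonal_design_def by auto
  have eq: "od_eval D x * (od_eval D x)\<^sup>T = od_form u s x \<cdot>\<^sub>m 1\<^sub>m (4*m)"
    using OD unfolding orthogonal_design_def by auto
  have dims: "dim_row (od_eval D x) = 4*m" "dim_col (od_eval D x) = 4*m"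
    using D unfolding od_eval_def by auto
  have "(od_eval D x * (od_eval D x)\<^sup>T) $$ (i,k) = (if i = k then od_form u s x else 0)"
    unfolding eq using i k by simp
  moreover have "(od_eval D x * (od_eval D x)\<^sup>T) $$ (i,k) = (\<Sum>j<4*m. od_eval D x $$ (i,j) * od_eval D x $$ (k,j))"
    using i k dims by (simp add: scalar_prod_def atLeast0LessThan)
  ultimately show ?thesis by simp
qed

lemma had_prod:
  assumes "H1 \<in> carrier_mat (4*n) (4*n)" "H2 \<in> carrier_mat (4*n) (4*n)" "p < 4*n" "p' < 4*n"
  shows "(H1 * H2\<^sup>T) $$ (p,p') = (\<Sum>q<4*n. H1 $$ (p,q) * H2 $$ (p',q))"
  using assms by (simp add: scalar_prod_def atLeast0LessThan)

lemma constr_prod: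
  assumes OD: "orthogonal_design (4*m) u s D"
    and H1: "hadamard_matrix (4*n) H1" and H2: "hadamard_matrix (4*n) H2" and n: "n > 0"
  shows "od_eval (constr m n D H1) x * (od_eval (constr m n D H2) x)\<^sup>T =
    mat (8*m*n) (8*m*n) (\<lambda>(r,r'). if r div (4*n) = r' div (4*n)
       then od_form u s x * (H1 * H2\<^sup>T) $$ (r mod (4*n), r' mod (4*n)) / 2 else 0)"
proof (rule eq_matI)
  have D: "D \<in> carrier_mat (4*m) (4*m)" using OD unfolding orthogonal_design_def by auto
  have h1: "\<forall>i<4*n. \<forall>j<4*n. H1 $$ (i,j) \<in> {1,-1}" "H1 \<in> carrier_mat (4*n) (4*n)"
    using H1 unfolding hadamard_matrix_def by auto
  have h2: "\<forall>i<4*n. \<forall>j<4*n. H2 $$ (i,j) \<in> {1,-1}" "H2 \<in> carrier_mat (4*n) (4*n)"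
    using H2 unfolding hadamard_matrix_def by auto
  have dimc: "dim_row (od_eval (constr m n D H) x) = 8*m*n" "dim_col (od_eval (constr m n D H) x) = 8*m*n" for H
    unfolding od_eval_def constr_def by auto
  show "dim_row (od_eval (constr m n D H1) x * (od_eval (constr m n D H2) x)\<^sup>T) = dim_row (mat (8*m*n) (8*m*n) (\<lambda>(r,r'). if r div (4*n) = r' div (4*n)
       then od_form u s x * (H1 * H2\<^sup>T) $$ (r mod (4*n), r' mod (4*n)) / 2 else 0))"
    using dimc by simp
  show "dim_col (od_eval (constr m n D H1) x * (od_eval (constr m n D H2) x)\<^sup>T) = dim_col (mat (8*m*n) (8*m*n) (\<lambda>(r,r'). if r div (4*n) = r' div (4*n)
       then od_form u s x * (H1 * H2\<^sup>T) $$ (r mod (4*n), r' mod (4*n)) / 2 else 0))"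
    using dimc by simp
  fix r r'
  assume "r < dim_row (mat (8*m*n) (8*m*n) (\<lambda>(r,r'). if r div (4*n) = r' div (4*n)
       then od_form u s x * (H1 * H2\<^sup>T) $$ (r mod (4*n), r' mod (4*n)) / 2 else 0))"
     "r' < dim_col (mat (8*m*n) (8*m*n) (\<lambda>(r,r'). if r div (4*n) = r' div (4*n)
       then od_form u s x * (H1 * H2\<^sup>T) $$ (r mod (4*n), r' mod (4*n)) / 2 else 0))"
  then have r: "r < 8*m*n" and r': "r' < 8*m*n" by auto
  define E where "E = od_eval D x"
  define f where "f = od_form u s x"
  define i where "i = r div (4*n)"
  define i' where "i' = r' div (4*n)"
  define p where "p = r mod (4*n)"
  define p' where "p' = r' mod (4*n)"
  define a1 where "a1 = (\<lambda>q. (H1 $$ (p,q) + H1 $$ (p,q+2*n))/2)"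
  define b1 where "b1 = (\<lambda>q. (H1 $$ (p,q) - H1 $$ (p,q+2*n))/2)"
  define a2 where "a2 = (\<lambda>q. (H2 $$ (p',q) + H2 $$ (p',q+2*n))/2)"
  define b2 where "b2 = (\<lambda>q. (H2 $$ (p',q) - H2 $$ (p',q+2*n))/2)"
  have ii: "i < 2*m" "i' < 2*m" "p < 4*n" "p' < 4*n" using decode[OF n r] decode[OF n r']
    unfolding i_def i'_def p_def p'_def by auto
  have jq: "j*(2*n)+q < 8*m*n" "(j*(2*n)+q) div (2*n) = j" "(j*(2*n)+q) mod (2*n) = q"
    if "j < 4*m" "q < 2*n" for j q
  proof -
    have "j*(2*n)+q < (j+1)*(2*n)" using that by simp
    also have "\<dots> \<le> (4*m)*(2*n)" using that by (intro mult_right_mono) auto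
    finally show "j*(2*n)+q < 8*m*n" by simp
    show "(j*(2*n)+q) div (2*n) = j" "(j*(2*n)+q) mod (2*n) = q" using that by auto
  qed
  have "(od_eval (constr m n D H1) x * (od_eval (constr m n D H2) x)\<^sup>T) $$ (r,r')
      = (\<Sum>c<8*m*n. od_eval (constr m n D H1) x $$ (r,c) * od_eval (constr m n D H2) x $$ (r',c))"
    using r r' dimc by (simp add: scalar_prod_def atLeast0LessThan)
  also have "\<dots> = (\<Sum>c<(4*m)*(2*n). od_eval (constr m n D H1) x $$ (r,c) * od_eval (constr m n D H2) x $$ (r',c))"
    by (simp add: algebra_simps)
  also have "\<dots> = (\<Sum>j<4*m. \<Sum>q<2*n. (E $$ (i,j) * a1 q + E $$ (i+2*m,j) * b1 q) * (E $$ (i',j) * a2 q + E $$ (i'+2*m,j) * b2 q))"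
  proof (subst sum_mult_split, intro sum.cong refl)
    fix j q assume jj: "j \<in> {..<4*m}" "q \<in> {..<2*n}"
    then have jq': "j*(2*n)+q < 8*m*n" "(j*(2*n)+q) div (2*n) = j" "(j*(2*n)+q) mod (2*n) = q"
      using jq by auto
    show "od_eval (constr m n D H1) x $$ (r, j*(2*n)+q) * od_eval (constr m n D H2) x $$ (r', j*(2*n)+q)
      = (E $$ (i,j) * a1 q + E $$ (i+2*m,j) * b1 q) * (E $$ (i',j) * a2 q + E $$ (i'+2*m,j) * b2 q)"
      unfolding constr_eval[OF D h1(1) n r jq'(1)] constr_eval[OF D h2(1) n r' jq'(1)] jq'(2,3)
      unfolding E_def i_def i'_def p_def p'_def a1_def a2_def b1_def b2_def by simp
  qed
  also have "\<dots> = (\<Sum>q<2*n. \<Sum>j<4*m. (E $$ (i,j) * a1 q + E $$ (i+2*m,j) * b1 q) * (E $$ (i',j) * a2 q + E $$ (i'+2*m,j) * b2 q))"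
    by (rule sum.swap)
  also have "\<dots> = (\<Sum>q<2*n. a1 q * a2 q * (\<Sum>j<4*m. E $$ (i,j) * E $$ (i',j))
      + a1 q * b2 q * (\<Sum>j<4*m. E $$ (i,j) * E $$ (i'+2*m,j))
      + b1 q * a2 q * (\<Sum>j<4*m. E $$ (i+2*m,j) * E $$ (i',j))
      + b1 q * b2 q * (\<Sum>j<4*m. E $$ (i+2*m,j) * E $$ (i'+2*m,j)))"
    by (rule sum.cong[OF refl]) (simp add: sum_distrib_left sum.distrib[symmetric] algebra_simps)
  also have "\<dots> = (\<Sum>q<2*n. if i = i' then f * (a1 q * a2 q + b1 q * b2 q) else 0)"
  proof -
    have o1: "(\<Sum>j<4*m. E $$ (i,j) * E $$ (i',j)) = (if i = i' then f else 0)"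
      using ii unfolding E_def f_def by (intro od_orth[OF OD]) auto
    have o2: "(\<Sum>j<4*m. E $$ (i,j) * E $$ (i'+2*m,j)) = 0"
      using ii od_orth[OF OD, of i "i'+2*m" x] unfolding E_def f_def by auto
    have o3: "(\<Sum>j<4*m. E $$ (i+2*m,j) * E $$ (i',j)) = 0"
      using ii od_orth[OF OD, of "i+2*m" i' x] unfolding E_def f_def by auto
    have o4: "(\<Sum>j<4*m. E $$ (i+2*m,j) * E $$ (i'+2*m,j)) = (if i = i' then f else 0)"
      using ii od_orth[OF OD, of "i+2*m" "i'+2*m" x] unfolding E_def f_def by auto
    show ?thesis unfolding o1 o2 o3 o4 by (rule sum.cong) (auto simp: algebra_simps)
  qed
  also have "\<dots> = (if i = i' then f * (\<Sum>q<2*n. a1 q * a2 q + b1 q * b2 q) else 0)"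
    by (simp add: sum_distrib_left)
  also have "(\<Sum>q<2*n. a1 q * a2 q + b1 q * b2 q) = (H1 * H2\<^sup>T) $$ (p,p') / 2"
  proof -
    have "(\<Sum>q<2*n. a1 q * a2 q + b1 q * b2 q) = (\<Sum>q<2*n. (H1 $$ (p,q) * H2 $$ (p',q) + H1 $$ (p,2*n+q) * H2 $$ (p',2*n+q)) / 2)"
      unfolding a1_def a2_def b1_def b2_def by (rule sum.cong) (auto simp: field_simps add.commute)
    also have "\<dots> = (\<Sum>q<2*n+2*n. H1 $$ (p,q) * H2 $$ (p',q)) / 2"
      by (simp only: sum_add_split sum.distrib add_divide_distrib sum_divide_distrib)
    also have "\<dots> = (H1 * H2\<^sup>T) $$ (p,p') / 2"
      using had_prod[OF h1(2) h2(2) ii(3,4)] by simp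
    finally show ?thesis .
  qed
  finally show "(od_eval (constr m n D H1) x * (od_eval (constr m n D H2) x)\<^sup>T) $$ (r,r') =
    mat (8*m*n) (8*m*n) (\<lambda>(r,r'). if r div (4*n) = r' div (4*n)
       then od_form u s x * (H1 * H2\<^sup>T) $$ (r mod (4*n), r' mod (4*n)) / 2 else 0) $$ (r,r')"
    using r r' unfolding i_def i'_def p_def p'_def f_def by simp
qed


lemma constr_bound:
  assumes OD: "orthogonal_design (4*m) u s D" and H: "hadamard_matrix (4*n) H" and n: "n > 0"
    and r: "r < 8*m*n" and c: "c < 8*m*n"
  shows "\<bar>constr m n D H $$ (r,c)\<bar> \<le> int u"
proof -
  have b: "\<forall>i<4*m. \<forall>j<4*m. \<bar>D $$ (i,j)\<bar> \<le> int u" using OD unfolding orthogonal_design_def by auto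
  note dc = decode[OF n r] decode[OF n c]
  have i1: "r div (4*n) < 4*m" "r div (4*n) + 2*m < 4*m" using dc by auto
  have "\<bar>constr m n D H $$ (r,c)\<bar> = (if H $$ (r mod (4*n), c mod (2*n)) = H $$ (r mod (4*n), c mod (2*n) + 2*n)
      then \<bar>D $$ (r div (4*n), c div (2*n))\<bar> else \<bar>D $$ (r div (4*n) + 2*m, c div (2*n))\<bar>)"
    unfolding constr_def using r c by (simp add: abs_mult)
  then show ?thesis using b i1 dc(8) by auto
qed

lemma od_form_scale: "od_form u (\<lambda>i. 2*n*s i) x = 2 * real n * od_form u s x"
  unfolding od_form_def by (simp add: sum_distrib_left algebra_simps)

lemma constr_od:
  assumes OD: "orthogonal_design (4*m) u s D" and H: "hadamard_matrix (4*n) H" and n: "n > 0"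
  shows "orthogonal_design (8*m*n) u (\<lambda>i. 2*n*s i) (constr m n D H)"
  unfolding orthogonal_design_def
proof (intro conjI allI impI)
  show "constr m n D H \<in> carrier_mat (8*m*n) (8*m*n)" unfolding constr_def by simp
  show "\<bar>constr m n D H $$ (i,j)\<bar> \<le> int u" if "i < 8*m*n" "j < 8*m*n" for i j
    using constr_bound[OF OD H n that] .
  fix x
  have HH: "H * H\<^sup>T = real (4*n) \<cdot>\<^sub>m 1\<^sub>m (4*n)" and Hc: "H \<in> carrier_mat (4*n) (4*n)"
    using H unfolding hadamard_matrix_def by auto
  show "od_eval (constr m n D H) x * (od_eval (constr m n D H) x)\<^sup>T = od_form u (\<lambda>i. 2*n*s i) x \<cdot>\<^sub>m 1\<^sub>m (8*m*n)"
    unfolding constr_prod[OF OD H H n] od_form_scale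
  proof (rule eq_matI)
    fix r r' assume "r < dim_row (2 * real n * od_form u s x \<cdot>\<^sub>m 1\<^sub>m (8 * m * n))"
      "r' < dim_col (2 * real n * od_form u s x \<cdot>\<^sub>m 1\<^sub>m (8 * m * n))"
    then have r: "r < 8*m*n" and r': "r' < 8*m*n" by auto
    have p: "r mod (4*n) < 4*n" "r' mod (4*n) < 4*n" using n by auto
    have eq: "r = r' \<longleftrightarrow> r div (4*n) = r' div (4*n) \<and> r mod (4*n) = r' mod (4*n)"
      by (metis div_mult_mod_eq)
    show "mat (8*m*n) (8*m*n) (\<lambda>(r,r'). if r div (4*n) = r' div (4*n)
       then od_form u s x * (H * H\<^sup>T) $$ (r mod (4*n), r' mod (4*n)) / 2 else 0) $$ (r,r')
      = (2 * real n * od_form u s x \<cdot>\<^sub>m 1\<^sub>m (8 * m * n)) $$ (r,r')"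
      using r r' p eq by (auto simp: HH)
  qed auto
qed

theorem proposition3p12:
  fixes m n u l :: nat and s :: "nat \<Rightarrow> nat" and a :: real
    and D :: "int mat" and H1 H2 :: "real mat"
  assumes "m > 0" and "n > 0"
    and "orthogonal_design (4*m) u s D"
    and "hadamard_matrix (4*n) H1" and "hadamard_matrix (4*n) H2"
    and "quasi_unbiased (4*n) (4*n) l a H1 H2"
  shows "\<exists>D1 D2. unbiased_ods (8*m*n) u (\<lambda>i. 2*n*s i) (16 * (real n)\<^sup>2 / a) D1 D2"
proof -
  note OD = assms(3) and H1 = assms(4) and H2 = assms(5) and n = assms(2)
  have apos: "a > 0" and W: "weighing_matrix (4*n) l ((1 / sqrt a) \<cdot>\<^sub>m (H1 * H2\<^sup>T))"
    using assms(6) unfolding quasi_unbiased_def by auto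
  define W0 where "W0 = (1 / sqrt a) \<cdot>\<^sub>m (H1 * H2\<^sup>T)"
  have W0e: "\<forall>i<4*n. \<forall>j<4*n. W0 $$ (i,j) \<in> {0,1,-1}" using W unfolding W0_def weighing_matrix_def by auto
  have H1c: "H1 \<in> carrier_mat (4*n) (4*n)" and H2c: "H2 \<in> carrier_mat (4*n) (4*n)"
    using H1 H2 unfolding hadamard_matrix_def by auto
  define V where "V = mat (8*m*n) (8*m*n) (\<lambda>(r,r'). if r div (4*n) = r' div (4*n) then W0 $$ (r mod (4*n), r' mod (4*n)) else 0)"
  have sq: "sqrt (16 * (real n)\<^sup>2 / a) = 4 * real n / sqrt a"
    using n by (simp add: real_sqrt_divide real_sqrt_mult)
  have sa: "sqrt a > 0" using apos by simp
  have o1: "orthogonal_design (8*m*n) u (\<lambda>i. 2*n*s i) (constr m n D H1)" using constr_od[OF OD H1 n] .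
  have o2: "orthogonal_design (8*m*n) u (\<lambda>i. 2*n*s i) (constr m n D H2)" using constr_od[OF OD H2 n] .
  have pos: "16 * (real n)\<^sup>2 / a > 0" using apos n by simp
  have Vc: "V \<in> carrier_mat (8*m*n) (8*m*n)" unfolding V_def by simp
  have Ve: "\<forall>i<8*m*n. \<forall>j<8*m*n. V $$ (i,j) \<in> {0,1,-1}"
    unfolding V_def using W0e n by auto
  have Veq: "\<forall>x. od_eval (constr m n D H1) x * (od_eval (constr m n D H2) x)\<^sup>T =
      (od_form u (\<lambda>i. 2*n*s i) x / sqrt (16 * (real n)\<^sup>2 / a)) \<cdot>\<^sub>m V"
  proof
    fix x
    show "od_eval (constr m n D H1) x * (od_eval (constr m n D H2) x)\<^sup>T =
      (od_form u (\<lambda>i. 2*n*s i) x / sqrt (16 * (real n)\<^sup>2 / a)) \<cdot>\<^sub>m V"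
      unfolding constr_prod[OF OD H1 H2 n] od_form_scale sq
    proof (rule eq_matI)
      fix r r' assume "r < dim_row ((2 * real n * od_form u s x / (4 * real n / sqrt a)) \<cdot>\<^sub>m V)"
        "r' < dim_col ((2 * real n * od_form u s x / (4 * real n / sqrt a)) \<cdot>\<^sub>m V)"
      then have r: "r < 8*m*n" and r': "r' < 8*m*n" unfolding V_def by auto
      have p: "r mod (4*n) < 4*n" "r' mod (4*n) < 4*n" using n by auto
      have G: "W0 $$ (r mod (4*n), r' mod (4*n)) = (H1 * H2\<^sup>T) $$ (r mod (4*n), r' mod (4*n)) / sqrt a"
        unfolding W0_def using p H1c H2c by simp
      have c: "2 * real n * od_form u s x / (4 * real n / sqrt a) * ((H1 * H2\<^sup>T) $$ (r mod (4*n), r' mod (4*n)) / sqrt a)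
          = od_form u s x * (H1 * H2\<^sup>T) $$ (r mod (4*n), r' mod (4*n)) / 2"
        using sa n by (simp add: field_simps)
      show "mat (8*m*n) (8*m*n) (\<lambda>(r,r'). if r div (4*n) = r' div (4*n)
       then od_form u s x * (H1 * H2\<^sup>T) $$ (r mod (4*n), r' mod (4*n)) / 2 else 0) $$ (r,r')
        = ((2 * real n * od_form u s x / (4 * real n / sqrt a)) \<cdot>\<^sub>m V) $$ (r,r')"
      proof -
        have Vr: "V $$ (r,r') = (if r div (4*n) = r' div (4*n) then (H1 * H2\<^sup>T) $$ (r mod (4*n), r' mod (4*n)) / sqrt a else 0)"
          unfolding V_def using r r' G by simp
        show ?thesis using r r' Vr c Vc by simp
      qed
    qed (auto simp: V_def)
  qed
  show ?thesis unfolding unbiased_ods_def using o1 o2 pos Vc Ve Veq by blast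
qed

end
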